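(* Assume the pair $(\mathcal D,\mathcal F)$ is good. Then: (i) for every $\delta\in(0,1)$, $\mathrm{Risk}_*(\delta^2/4)\ge\Phi_*(\ln(1/\delta))$; (ii) for every $\varepsilon\in(0,1/4)$, $\mathrm{Risk}_*(\varepsilon)\ge\dfrac{\ln(1/(4\varepsilon))}{2\ln(2/\varepsilon)}\,\Phi_*(\ln(2/\varepsilon))$.
   Context: Let $(\Omega,P)$ be a Polish space equipped with a $\sigma$-finite Borel measure $P$, let $\mathcal M\subset\mathbb R^m$, and let $\mathcal D=\{p_\mu\}_{\mu\in\mathcal M}$ be a parametric density family: for each $\mu\in\mathcal M$, $p_\mu$ is a nonnegative Borel function on $\Omega$ with $\int_\Omega p_\mu\,dP=1$. Let $\mathcal F$ be a finite-dimensional linear space of Borel functions on $\Omega$ containing the constants. The pair $(\mathcal D,\mathcal F)$ is called good if: (1) $\mathcal M$ is an open convex subset of $\mathbb R^m$; (2) $p_\mu(\omega)>0$ for all $\mu\in\mathcal M$, $\omega\in\Omega$; (3) for all $\mu,\nu\in\mathcal M$ the function $\omega\mapsto\ln(p_\mu(\omega)/p_\nu(\omega))$ belongs to $\mathcal F$; (4) for every $\phi\in\mathcal F$ the function $\mu\mapsto\ln\int_\Omega e^{\phi(\omega)}p_\mu(\omega)P(d\omega)$ is well defined (finite) and concave on $\mathcal M$. Let $X\subset\mathbb R^n$ be a nonempty convex compact set, $x\mapsto A(x)$ an affine map $\mathbb R^n\to\mathbb R^m$ with $A(X)\subset\mathcal M$, and $g\in\mathbb R^n$. An observation $\omega$ has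 density $p_{A(x)}$ w.r.t. $P$ for an unknown $x\in X$; the goal is to estimate $g^Tx$. An estimate is a Borel function $\hat g:\Omega\to\mathbb R$. For $\varepsilon\in(0,1)$ the $\varepsilon$-risk of $\hat g$ is $\mathrm{Risk}(\hat g;\varepsilon)=\inf\{\delta:\ \sup_{x\in X}\mathrm{Prob}_{\omega\sim p_{A(x)}}\{|\hat g(\omega)-g^Tx|>\delta\}<\varepsilon\}$; $\mathrm{Risk}_*(\varepsilon)=\inf_{\hat g}\mathrm{Risk}(\hat g;\varepsilon)$, the infimum over all Borel estimates. For $r\ge0$, $x,y\in X$, $\phi\in\mathcal F$, $\alpha>0$ define $$\Phi_r(x,y;\phi,\alpha)=g^Tx-g^Ty+\alpha\ln\int_\Omega e^{\phi(\omega)/\alpha}p_{A(y)}(\omega)P(d\omega)+\alpha\ln\int_\Omega e^{-\phi(\omega)/\alpha}p_{A(x)}(\omega)P(d\omega)+2\alpha r,$$ and $\Phi_*(r)=\tfrac12\inf_{\phi\in\mathcal F,\alpha>0}\sup_{x,y\in X}\Phi_r(x,y;\phi,\alpha)$. *)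

theory Defs
  imports "HOL-Analysis.Analysis"
begin

definition fin_dim_fun_space :: "('w \<Rightarrow> real) set \<Rightarrow> bool" where
  "fin_dim_fun_space F \<longleftrightarrow>
     (\<exists>B :: ('w \<Rightarrow> real) list.
        F = {(\<lambda>\<omega>. \<Sum>i<length B. c i * (B ! i) \<omega>) | c :: nat \<Rightarrow> real. True})"

text \<open>The pair (D,F) is good. P is the reference measure on Omega, p mu is the density
  indexed by the parameter mu in the parameter set M.\<close>
definition good_pair ::
  "'w::polish_space measure \<Rightarrow> ('m::euclidean_space) set \<Rightarrow> ('m \<Rightarrow> 'w \<Rightarrow> real)
     \<Rightarrow> ('w \<Rightarrow> real) set \<Rightarrow> bool" where
  "good_pair P M p F \<longleftrightarrow>
     \<comment> \<open>standing assumptions\<close>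
     sets P = sets borel \<and> sigma_finite_measure P \<and>
     (\<forall>\<mu>\<in>M. p \<mu> \<in> borel_measurable P \<and> (\<forall>\<omega>. 0 \<le> p \<mu> \<omega>) \<and>
              (\<integral>\<^sup>+ \<omega>. ennreal (p \<mu> \<omega>) \<partial>P) = 1) \<and>
     fin_dim_fun_space F \<and> (\<forall>\<phi>\<in>F. \<phi> \<in> borel_measurable P) \<and> (\<forall>c. (\<lambda>_. c) \<in> F) \<and>
     \<comment> \<open>(1)\<close>
     open M \<and> convex M \<and>
     \<comment> \<open>(2)\<close>
     (\<forall>\<mu>\<in>M. \<forall>\<omega>. 0 < p \<mu> \<omega>) \<and>
     \<comment> \<open>(3)\<close>
     (\<forall>\<mu>\<in>M. \<forall>\<nu>\<in>M. (\<lambda>\<omega>. ln (p \<mu> \<omega> / p \<nu> \<omega>)) \<in> F) \<and>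
     \<comment> \<open>(4)\<close>
     (\<forall>\<phi>\<in>F. (\<forall>\<mu>\<in>M. integrable P (\<lambda>\<omega>. exp (\<phi> \<omega>) * p \<mu> \<omega>)) \<and>
              concave_on M (\<lambda>\<mu>. ln (\<integral>\<omega>. exp (\<phi> \<omega>) * p \<mu> \<omega> \<partial>P)))"

definition miss_prob ::
  "'w measure \<Rightarrow> ('m \<Rightarrow> 'w \<Rightarrow> real) \<Rightarrow> ('n \<Rightarrow> 'm) \<Rightarrow> ('n::real_inner)
     \<Rightarrow> ('w \<Rightarrow> real) \<Rightarrow> 'n \<Rightarrow> real \<Rightarrow> real" where
  "miss_prob P p A g ghat x \<delta> =
     measure (density P (\<lambda>\<omega>. ennreal (p (A x) \<omega>)))
             {\<omega> \<in> space P. \<bar>ghat \<omega> - g \<bullet> x\<bar> > \<delta>}"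

text \<open>epsilon-risk of an estimate (value +infinity if no delta works).\<close>
definition risk ::
  "'w measure \<Rightarrow> ('m \<Rightarrow> 'w \<Rightarrow> real) \<Rightarrow> ('n \<Rightarrow> 'm) \<Rightarrow> 'n set \<Rightarrow> ('n::real_inner)
     \<Rightarrow> ('w \<Rightarrow> real) \<Rightarrow> real \<Rightarrow> ereal" where
  "risk P p A X g ghat \<epsilon> =
     Inf {ereal \<delta> | \<delta>. (SUP x\<in>X. ereal (miss_prob P p A g ghat x \<delta>)) < ereal \<epsilon>}"

definition risk_star ::
  "'w measure \<Rightarrow> ('m \<Rightarrow> 'w \<Rightarrow> real) \<Rightarrow> ('n \<Rightarrow> 'm) \<Rightarrow> 'n set \<Rightarrow> ('n::real_inner)
     \<Rightarrow> real \<Rightarrow> ereal" where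
  "risk_star P p A X g \<epsilon> = (INF ghat\<in>borel_measurable P. risk P p A X g ghat \<epsilon>)"

definition Phi_r ::
  "'w measure \<Rightarrow> ('m \<Rightarrow> 'w \<Rightarrow> real) \<Rightarrow> ('n \<Rightarrow> 'm) \<Rightarrow> ('n::real_inner) \<Rightarrow> real
     \<Rightarrow> 'n \<Rightarrow> 'n \<Rightarrow> ('w \<Rightarrow> real) \<Rightarrow> real \<Rightarrow> real" where
  "Phi_r P p A g r x y \<phi> \<alpha> =
     g \<bullet> x - g \<bullet> y
     + \<alpha> * ln (\<integral>\<omega>. exp (\<phi> \<omega> / \<alpha>) * p (A y) \<omega> \<partial>P)
     + \<alpha> * ln (\<integral>\<omega>. exp (- \<phi> \<omega> / \<alpha>) * p (A x) \<omega> \<partial>P)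
     + 2 * \<alpha> * r"

definition Phi_star ::
  "'w measure \<Rightarrow> ('m \<Rightarrow> 'w \<Rightarrow> real) \<Rightarrow> ('n \<Rightarrow> 'm) \<Rightarrow> 'n set \<Rightarrow> ('w \<Rightarrow> real) set
     \<Rightarrow> ('n::real_inner) \<Rightarrow> real \<Rightarrow> ereal" where
  "Phi_star P p A X F g r =
     ereal (1/2) * (INF \<phi>\<alpha>\<in>F \<times> {0<..}.
        (SUP xy\<in>X \<times> X. ereal (Phi_r P p A g r (fst xy) (snd xy) (fst \<phi>\<alpha>) (snd \<phi>\<alpha>))))"

end

theory Submission
  imports Defs
begin


lemma two_fun:
  fixes g1 g2 :: "'y::euclidean_space \<Rightarrow> real"
  assumes Y: "compact Y" "convex Y" and c1: "continuous_on Y g1" and c2: "continuous_on Y g2"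
    and cv1: "concave_on Y g1" and cv2: "concave_on Y g2"
    and mn: "\<forall>y\<in>Y. min (g1 y) (g2 y) < c"
  shows "\<exists>t. 0 \<le> t \<and> t \<le> 1 \<and> (\<forall>y\<in>Y. (1-t)*g1 y + t*g2 y < c)"
proof (cases "Y = {}")
  case True then show ?thesis by (intro exI[of _ 0]) auto
next
  case False
  have "continuous_on Y (\<lambda>y. min (g1 y) (g2 y))" using c1 c2 by (intro continuous_intros)
  then obtain y0 where y0: "y0 \<in> Y" and y0max: "\<And>y. y \<in> Y \<Longrightarrow> min (g1 y) (g2 y) \<le> min (g1 y0) (g2 y0)"
    using continuous_attains_sup[OF Y(1) False] by blast
  define m where "m = min (g1 y0) (g2 y0)"
  have mc: "m < c" using mn y0 by (auto simp: m_def)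
  define c' where "c' = (m + c) / 2"
  define S where "S = {z::real\<times>real. \<exists>y\<in>Y. fst z \<le> g1 y \<and> snd z \<le> g2 y}"
  have convS: "convex S"
  proof (rule convexI)
    fix z1 z2 :: "real\<times>real" and u v :: real
    assume z1: "z1 \<in> S" and z2: "z2 \<in> S" and uv0: "0 \<le> u" "0 \<le> v" "u + v = 1"
    hence uv: "0 \<le> u \<and> 0 \<le> v \<and> u + v = 1" by simp
    obtain y1 where y1: "y1 \<in> Y" "fst z1 \<le> g1 y1" "snd z1 \<le> g2 y1" using z1 by (auto simp: S_def)
    obtain y2 where y2: "y2 \<in> Y" "fst z2 \<le> g1 y2" "snd z2 \<le> g2 y2" using z2 by (auto simp: S_def)
    define y where "y = u *\<^sub>R y1 + v *\<^sub>R y2"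
    have yY: "y \<in> Y" using Y(2) y1 y2 uv unfolding y_def convex_def by blast
    have "g1 y \<ge> u * g1 y1 + v * g1 y2" using cv1 y1 y2 uv unfolding concave_on_iff y_def by blast
    moreover have "g2 y \<ge> u * g2 y1 + v * g2 y2" using cv2 y1 y2 uv unfolding concave_on_iff y_def by blast
    moreover have "u * fst z1 \<le> u * g1 y1" "v * fst z2 \<le> v * g1 y2"
      "u * snd z1 \<le> u * g2 y1" "v * snd z2 \<le> v * g2 y2"
      using y1 y2 uv by (auto intro: mult_left_mono)
    ultimately have "fst (u *\<^sub>R z1 + v *\<^sub>R z2) \<le> g1 y \<and> snd (u *\<^sub>R z1 + v *\<^sub>R z2) \<le> g2 y"
      by simp
    then show "u *\<^sub>R z1 + v *\<^sub>R z2 \<in> S" using yY by (auto simp: S_def)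
  qed
  define T where "T = {z::real\<times>real. min (fst z) (snd z) \<le> m}"
  have closedT: "closed T" unfolding T_def
    by (intro closed_Collect_le continuous_intros)
  have ST: "S \<subseteq> T"
  proof
    fix z assume "z \<in> S"
    then obtain y where y: "y \<in> Y" "fst z \<le> g1 y" "snd z \<le> g2 y" by (auto simp: S_def)
    have "min (fst z) (snd z) \<le> min (g1 y) (g2 y)" using y by auto
    also have "\<dots> \<le> m" using y0max[OF y(1)] by (simp add: m_def)
    finally show "z \<in> T" by (simp add: T_def)
  qed
  have clT: "closure S \<subseteq> T" using closure_minimal[OF ST closedT] .
  have notin: "(c', c') \<notin> closure S" using clT mc by (auto simp: T_def c'_def)
  obtain a b where ab: "inner a (c',c') < b" and abS: "\<forall>z\<in>closure S. inner a z > b"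
    using separating_hyperplane_closed_point[OF convex_closure[OF convS] closed_closure notin] by blast
  obtain a1 a2 where a: "a = (a1, a2)" by (cases a)
  have inS: "\<And>z. z \<in> S \<Longrightarrow> a1 * fst z + a2 * snd z > b"
  proof -
    fix z assume "z \<in> S"
    hence "z \<in> closure S" using closure_subset by blast
    hence "inner a z > b" using abS by blast
    thus "a1 * fst z + a2 * snd z > b" using a by (cases z) (simp add: inner_Pair)
  qed
  have g0: "a1 * g1 y0 + a2 * g2 y0 > b" using inS[of "(g1 y0, g2 y0)"] y0 by (auto simp: S_def)
  have a1: "a1 \<le> 0"
  proof (rule ccontr)
    assume "\<not> a1 \<le> 0" hence pos: "a1 > 0" by simp
    define K where "K = (a1 * g1 y0 + a2 * g2 y0 - b) / a1"
    have "K > 0" using g0 pos by (simp add: K_def)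
    have "(g1 y0 - K, g2 y0) \<in> S" unfolding S_def using y0 \<open>K > 0\<close> by (intro CollectI bexI[of _ y0]) auto
    from inS[OF this] have "a1 * (g1 y0 - K) + a2 * g2 y0 > b" by simp
    moreover have "a1 * (g1 y0 - K) + a2 * g2 y0 = b" using pos by (simp add: K_def field_simps)
    ultimately show False by simp
  qed
  have a2: "a2 \<le> 0"
  proof (rule ccontr)
    assume "\<not> a2 \<le> 0" hence pos: "a2 > 0" by simp
    define K where "K = (a1 * g1 y0 + a2 * g2 y0 - b) / a2"
    have "K > 0" using g0 pos by (simp add: K_def)
    have "(g1 y0, g2 y0 - K) \<in> S" unfolding S_def using y0 \<open>K > 0\<close> by (intro CollectI bexI[of _ y0]) auto
    from inS[OF this] have "a1 * g1 y0 + a2 * (g2 y0 - K) > b" by simp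
    moreover have "a1 * g1 y0 + a2 * (g2 y0 - K) = b" using pos by (simp add: K_def field_simps)
    ultimately show False by simp
  qed
  have abz: "a1 * c' + a2 * c' < b" using ab a by (simp add: inner_Pair)
  define s where "s = - a1 - a2"
  have spos: "s > 0"
  proof (rule ccontr)
    assume "\<not> s > 0" hence "a1 = 0" "a2 = 0" using a1 a2 by (auto simp: s_def)
    thus False using abz g0 by simp
  qed
  define t where "t = - a2 / s"
  show ?thesis
  proof (intro exI[of _ t] conjI ballI)
    show "0 \<le> t" using a2 spos by (simp add: t_def divide_nonpos_pos)
    show "t \<le> 1" using a1 spos by (simp add: t_def s_def field_simps)
    fix y assume y: "y \<in> Y"
    have gy: "a1 * g1 y + a2 * g2 y > b" using inS[of "(g1 y, g2 y)"] y by (auto simp: S_def)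
    have "(1 - t) * g1 y + t * g2 y = (- a1 * g1 y - a2 * g2 y) / s"
    proof -
      have "1 - t = - a1 / s" using spos by (simp add: t_def s_def field_simps)
      thus ?thesis by (simp add: t_def diff_divide_distrib)
    qed
    also have "\<dots> < (- a1 * c' - a2 * c') / s" using gy abz spos by (intro divide_strict_right_mono) auto
    also have "\<dots> = c'" using spos by (simp add: s_def field_simps)
    also have "\<dots> < c" using mc by (simp add: c'_def)
    finally show "(1 - t) * g1 y + t * g2 y < c" .
  qed
qed

lemma minimax_list:
  fixes f :: "'y::euclidean_space \<Rightarrow> 'th \<Rightarrow> real"
  assumes cont: "\<forall>\<theta>\<in>\<Theta>. continuous_on Y (\<lambda>y. f y \<theta>)"
    and conc: "\<forall>\<theta>\<in>\<Theta>. concave_on Y (\<lambda>y. f y \<theta>)"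
    and mix: "\<forall>a\<in>\<Theta>. \<forall>b\<in>\<Theta>. \<forall>t. 0 \<le> t \<and> t \<le> 1 \<longrightarrow>
                 mix t a b \<in> \<Theta> \<and> (\<forall>y\<in>Y. f y (mix t a b) \<le> (1-t) * f y a + t * f y b)"
    and ne: "\<theta>0 \<in> \<Theta>"
  shows "Y' \<subseteq> Y \<Longrightarrow> compact Y' \<Longrightarrow> convex Y' \<Longrightarrow> set ts \<subseteq> \<Theta> \<Longrightarrow>
    (\<forall>y\<in>Y'. \<exists>\<theta>\<in>set ts. f y \<theta> < c) \<Longrightarrow> \<exists>\<theta>\<in>\<Theta>. \<forall>y\<in>Y'. f y \<theta> < c"
proof (induction ts arbitrary: Y')
  case Nil
  then show ?case using ne by auto
next
  case (Cons tk ts)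
  have mix1: "\<And>a b t. a \<in> \<Theta> \<Longrightarrow> b \<in> \<Theta> \<Longrightarrow> 0 \<le> t \<Longrightarrow> t \<le> 1 \<Longrightarrow> mix t a b \<in> \<Theta>"
    using mix by simp
  have mix2: "\<And>a b t y. a \<in> \<Theta> \<Longrightarrow> b \<in> \<Theta> \<Longrightarrow> 0 \<le> t \<Longrightarrow> t \<le> 1 \<Longrightarrow> y \<in> Y \<Longrightarrow>
     f y (mix t a b) \<le> (1-t) * f y a + t * f y b"
    using mix by simp
  have tk: "tk \<in> \<Theta>" and tsT: "set ts \<subseteq> \<Theta>" using Cons.prems by auto
  define Y2 where "Y2 = Y' \<inter> (Y' \<inter> (\<lambda>y. f y tk) -` {c..})"
  have ctk: "continuous_on Y' (\<lambda>y. f y tk)"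
    using cont tk Cons.prems(1) continuous_on_subset by blast
  have "closed (Y' \<inter> (\<lambda>y. f y tk) -` {c..})"
    by (rule continuous_closed_preimage[OF ctk compact_imp_closed[OF Cons.prems(2)]]) auto
  hence cY2: "compact Y2" unfolding Y2_def using Cons.prems(2) by blast
  have Y2sub: "Y2 \<subseteq> Y'" by (auto simp: Y2_def)
  have vY2: "convex Y2"
  proof (rule convexI)
    fix y1 y2 and u v :: real
    assume a: "y1 \<in> Y2" "y2 \<in> Y2" "0 \<le> u" "0 \<le> v" "u + v = 1"
    have "u *\<^sub>R y1 + v *\<^sub>R y2 \<in> Y'" using a Y2sub Cons.prems(3) unfolding convex_def by blast
    moreover have "f (u *\<^sub>R y1 + v *\<^sub>R y2) tk \<ge> u * f y1 tk + v * f y2 tk"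
      using conc tk a Y2sub Cons.prems(1) unfolding concave_on_iff by blast
    moreover have "u * f y1 tk \<ge> u * c" "v * f y2 tk \<ge> v * c"
      using a by (auto simp: Y2_def intro: mult_left_mono)
    moreover have "u * c + v * c = c" using a(5) by (metis distrib_right mult_1)
    ultimately show "u *\<^sub>R y1 + v *\<^sub>R y2 \<in> Y2" by (auto simp: Y2_def)
  qed
  have "\<forall>y\<in>Y2. \<exists>\<theta>\<in>set ts. f y \<theta> < c"
  proof
    fix y assume y: "y \<in> Y2"
    then obtain \<theta> where "\<theta> \<in> set (tk # ts)" "f y \<theta> < c" using Cons.prems(5) Y2sub by blast
    moreover have "f y tk \<ge> c" using y by (auto simp: Y2_def)
    ultimately show "\<exists>\<theta>\<in>set ts. f y \<theta> < c" by auto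
  qed
  then obtain h where h: "h \<in> \<Theta>" and hY2: "\<forall>y\<in>Y2. f y h < c"
  proof -
    have "Y2 \<subseteq> Y" using Y2sub Cons.prems(1) by blast
    from Cons.IH[OF this cY2 vY2 tsT] \<open>\<forall>y\<in>Y2. \<exists>\<theta>\<in>set ts. f y \<theta> < c\<close>
    show ?thesis using that by blast
  qed
  have minc: "\<forall>y\<in>Y'. min (f y h) (f y tk) < c"
  proof
    fix y assume y: "y \<in> Y'"
    show "min (f y h) (f y tk) < c"
    proof (cases "f y tk \<ge> c")
      case True then have "y \<in> Y2" using y by (auto simp: Y2_def)
      then show ?thesis using hY2 by auto
    qed auto
  qed
  have ch: "continuous_on Y' (\<lambda>y. f y h)"
    using cont h Cons.prems(1) continuous_on_subset by blast
  have vh: "concave_on Y' (\<lambda>y. f y h)" and vtk: "concave_on Y' (\<lambda>y. f y tk)"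
    using conc h tk Cons.prems(1,3) unfolding concave_on_def by (auto intro: convex_on_subset)
  obtain t where t: "0 \<le> t" "t \<le> 1" and tY: "\<forall>y\<in>Y'. (1-t) * f y h + t * f y tk < c"
    using two_fun[OF Cons.prems(2,3) ch ctk vh vtk minc] by blast
  show ?case
  proof (intro bexI[of _ "mix t h tk"] ballI)
    show "mix t h tk \<in> \<Theta>" using mix1[OF h tk t] .
    fix y assume y: "y \<in> Y'"
    have "f y (mix t h tk) \<le> (1-t) * f y h + t * f y tk" using mix2[OF h tk t] y Cons.prems(1) by auto
    also have "\<dots> < c" using tY y by blast
    finally show "f y (mix t h tk) < c" .
  qed
qed

lemma minimax_abstract:
  fixes f :: "'y::euclidean_space \<Rightarrow> 'th \<Rightarrow> real"
  assumes Y: "compact Y" "convex Y"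
    and cont: "\<forall>\<theta>\<in>\<Theta>. continuous_on Y (\<lambda>y. f y \<theta>)"
    and conc: "\<forall>\<theta>\<in>\<Theta>. concave_on Y (\<lambda>y. f y \<theta>)"
    and mix: "\<forall>a\<in>\<Theta>. \<forall>b\<in>\<Theta>. \<forall>t. 0 \<le> t \<and> t \<le> 1 \<longrightarrow>
                 mix t a b \<in> \<Theta> \<and> (\<forall>y\<in>Y. f y (mix t a b) \<le> (1-t) * f y a + t * f y b)"
    and ne: "\<theta>0 \<in> \<Theta>"
    and pt: "\<forall>y\<in>Y. \<exists>\<theta>\<in>\<Theta>. f y \<theta> < c"
  shows "\<exists>\<theta>\<in>\<Theta>. \<forall>y\<in>Y. f y \<theta> < c"
proof -
  have "\<forall>\<theta>\<in>\<Theta>. \<exists>A. open A \<and> A \<inter> Y = (\<lambda>y. f y \<theta>) -` {..<c} \<inter> Y"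
  proof
    fix \<theta> assume "\<theta> \<in> \<Theta>"
    hence "continuous_on Y (\<lambda>y. f y \<theta>)" using cont by simp
    thus "\<exists>A. open A \<and> A \<inter> Y = (\<lambda>y. f y \<theta>) -` {..<c} \<inter> Y"
      unfolding continuous_on_open_invariant by (simp add: open_lessThan)
  qed
  then obtain U where U: "\<And>\<theta>. \<theta> \<in> \<Theta> \<Longrightarrow> open (U \<theta>) \<and> U \<theta> \<inter> Y = (\<lambda>y. f y \<theta>) -` {..<c} \<inter> Y"
    by metis
  have cov: "Y \<subseteq> (\<Union>\<theta>\<in>\<Theta>. U \<theta>)"
  proof
    fix y assume y: "y \<in> Y"
    then obtain \<theta> where "\<theta> \<in> \<Theta>" "f y \<theta> < c" using pt by blast
    then have "y \<in> U \<theta>" using U[of \<theta>] y by blast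
    then show "y \<in> (\<Union>\<theta>\<in>\<Theta>. U \<theta>)" using \<open>\<theta> \<in> \<Theta>\<close> by blast
  qed
  obtain C where C: "C \<subseteq> \<Theta>" "finite C" "Y \<subseteq> (\<Union>\<theta>\<in>C. U \<theta>)"
    using compactE_image[OF Y(1), of \<Theta> U, OF conjunct1[OF U] cov] by metis
  obtain ts where ts: "set ts = C" using finite_list[OF C(2)] by blast
  have "\<forall>y\<in>Y. \<exists>\<theta>\<in>set ts. f y \<theta> < c"
  proof
    fix y assume y: "y \<in> Y"
    then obtain \<theta> where th: "\<theta> \<in> C" "y \<in> U \<theta>" using C(3) by blast
    then have "f y \<theta> < c" using U[of \<theta>] C(1) y by blast
    then show "\<exists>\<theta>\<in>set ts. f y \<theta> < c" using th ts by blast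
  qed
  moreover have "set ts \<subseteq> \<Theta>" using C(1) ts by simp
  ultimately show ?thesis
    using minimax_list[OF cont conc mix ne, of Y ts c] Y by blast
qed



locale gp =
  fixes P :: "'w::polish_space measure" and M :: "('m::euclidean_space) set"
    and p :: "'m \<Rightarrow> 'w \<Rightarrow> real" and F :: "('w \<Rightarrow> real) set"
  assumes good: "good_pair P M p F"
begin

definition I :: "('w \<Rightarrow> real) \<Rightarrow> 'm \<Rightarrow> real" where
  "I \<phi> \<mu> = (\<integral>\<omega>. exp (\<phi> \<omega>) * p \<mu> \<omega> \<partial>P)"

lemma sets_P: "sets P = sets borel" using good by (simp add: good_pair_def)
lemma space_P: "space P = UNIV" using sets_eq_imp_space_eq[OF sets_P] by simp
lemma meas_P[measurable_cong]: "sets P = sets borel" by (rule sets_P)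

lemma p_meas: "\<mu> \<in> M \<Longrightarrow> p \<mu> \<in> borel_measurable P" using good by (simp add: good_pair_def)
lemma p_pos: "\<mu> \<in> M \<Longrightarrow> 0 < p \<mu> \<omega>" using good by (simp add: good_pair_def)
lemma p_nn: "\<mu> \<in> M \<Longrightarrow> (\<integral>\<^sup>+ \<omega>. ennreal (p \<mu> \<omega>) \<partial>P) = 1" using good by (simp add: good_pair_def)
lemma F_meas: "\<phi> \<in> F \<Longrightarrow> \<phi> \<in> borel_measurable P" using good by (simp add: good_pair_def)
lemma F_const: "(\<lambda>_. c) \<in> F" using good by (simp add: good_pair_def)
lemma F_ratio: "\<mu> \<in> M \<Longrightarrow> \<nu> \<in> M \<Longrightarrow> (\<lambda>\<omega>. ln (p \<mu> \<omega> / p \<nu> \<omega>)) \<in> F"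
  using good by (simp add: good_pair_def)
lemma F_int: "\<phi> \<in> F \<Longrightarrow> \<mu> \<in> M \<Longrightarrow> integrable P (\<lambda>\<omega>. exp (\<phi> \<omega>) * p \<mu> \<omega>)"
  using good by (simp add: good_pair_def)
lemma F_conc: "\<phi> \<in> F \<Longrightarrow> concave_on M (\<lambda>\<mu>. ln (I \<phi> \<mu>))"
  using good by (simp add: good_pair_def I_def)
lemma M_open: "open M" using good by (simp add: good_pair_def)

lemma F_lin:
  assumes "\<phi> \<in> F" "\<psi> \<in> F"
  shows "(\<lambda>\<omega>. a * \<phi> \<omega> + b * \<psi> \<omega>) \<in> F"
proof -
  obtain B :: "('w \<Rightarrow> real) list" where B: "F = {(\<lambda>\<omega>. \<Sum>i<length B. c i * (B ! i) \<omega>) | c :: nat \<Rightarrow> real. True}"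
    using good by (auto simp: good_pair_def fin_dim_fun_space_def)
  obtain c1 where c1: "\<phi> = (\<lambda>\<omega>. \<Sum>i<length B. c1 i * (B ! i) \<omega>)" using assms(1) B by blast
  obtain c2 where c2: "\<psi> = (\<lambda>\<omega>. \<Sum>i<length B. c2 i * (B ! i) \<omega>)" using assms(2) B by blast
  have "(\<lambda>\<omega>. a * \<phi> \<omega> + b * \<psi> \<omega>) = (\<lambda>\<omega>. \<Sum>i<length B. (a * c1 i + b * c2 i) * (B ! i) \<omega>)"
    unfolding c1 c2 by (auto simp: sum_distrib_left sum.distrib algebra_simps)
  then have "\<exists>c. (\<lambda>\<omega>. a * \<phi> \<omega> + b * \<psi> \<omega>) = (\<lambda>\<omega>. \<Sum>i<length B. c i * (B ! i) \<omega>) \<and> True"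
    by (intro exI[of _ "\<lambda>i. a * c1 i + b * c2 i"]) simp
  then show ?thesis unfolding B by (simp only: mem_Collect_eq)
qed

lemma F_scale: "\<phi> \<in> F \<Longrightarrow> (\<lambda>\<omega>. a * \<phi> \<omega>) \<in> F"
  using F_lin[of \<phi> \<phi> a 0] by simp

lemma F_div: "\<phi> \<in> F \<Longrightarrow> (\<lambda>\<omega>. \<phi> \<omega> / a) \<in> F"
  using F_scale[of \<phi> "1/a"] by simp

lemma F_neg: "\<phi> \<in> F \<Longrightarrow> (\<lambda>\<omega>. - \<phi> \<omega>) \<in> F"
  using F_scale[of \<phi> "-1"] by simp

lemma F_negdiv: "\<phi> \<in> F \<Longrightarrow> (\<lambda>\<omega>. - \<phi> \<omega> / a) \<in> F"
  using F_scale[of \<phi> "-1/a"] by simp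

lemma p_int: "\<mu> \<in> M \<Longrightarrow> integrable P (p \<mu>)"
  using F_int[OF F_const[of 0]] by simp

lemma p_integral: "\<mu> \<in> M \<Longrightarrow> (\<integral>\<omega>. p \<mu> \<omega> \<partial>P) = 1"
proof -
  assume m: "\<mu> \<in> M"
  have "(\<integral>\<omega>. p \<mu> \<omega> \<partial>P) = enn2real (\<integral>\<^sup>+ \<omega>. ennreal (p \<mu> \<omega>) \<partial>P)"
  proof (rule integral_eq_nn_integral)
    show "p \<mu> \<in> borel_measurable P" using p_meas[OF m] .
    show "AE \<omega> in P. 0 \<le> p \<mu> \<omega>" by (rule AE_I2) (simp add: p_pos[OF m] less_imp_le)
  qed
  then show ?thesis using p_nn[OF m] by simp
qed

lemma integral_pos:
  fixes f :: "'w \<Rightarrow> real"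
  assumes f: "integrable P f" and pos: "\<And>\<omega>. f \<omega> > 0" and m: "\<mu> \<in> M"
  shows "integral\<^sup>L P f > 0"
proof (rule ccontr)
  assume "\<not> integral\<^sup>L P f > 0"
  moreover have "integral\<^sup>L P f \<ge> 0" by (rule integral_nonneg_AE, rule AE_I2) (simp add: pos less_imp_le)
  ultimately have "integral\<^sup>L P f = 0" by simp
  then have "AE \<omega> in P. f \<omega> = 0"
    using integral_nonneg_eq_0_iff_AE[OF f] pos by (simp add: less_imp_le)
  then have "AE \<omega> in P. False"
  proof (rule AE_mp)
    show "AE \<omega> in P. f \<omega> = 0 \<longrightarrow> False"
    proof (rule AE_I2)
      fix \<omega> show "f \<omega> = 0 \<longrightarrow> False" using pos[of \<omega>] by simp
    qed
  qed
  then have "AE \<omega> in P. p \<mu> \<omega> = 0" by (rule AE_mp) simp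
  then have "(\<integral>\<omega>. p \<mu> \<omega> \<partial>P) = (\<integral>\<omega>. 0 \<partial>P)"
    by (intro integral_cong_AE) (simp_all add: p_meas m)
  then show False using p_integral[OF m] by simp
qed

lemma I_pos: "\<phi> \<in> F \<Longrightarrow> \<mu> \<in> M \<Longrightarrow> I \<phi> \<mu> > 0"
  unfolding I_def using F_int p_pos by (intro integral_pos) auto

end



lemma amgm_t:
  fixes a b t :: real
  assumes "0 \<le> a" "0 \<le> b" "0 < t"
  shows "sqrt (a * b) \<le> (t * a + b / t) / 2"
proof -
  have "0 \<le> (t * sqrt a - sqrt b)^2" by simp
  also have "\<dots> = t^2 * a + b - 2 * t * sqrt (a * b)"
    using assms by (simp add: power2_eq_square algebra_simps real_sqrt_mult)
  finally have "2 * t * sqrt (a * b) \<le> t^2 * a + b" by simp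
  then have "sqrt (a * b) \<le> (t^2 * a + b) / (2 * t)" using assms by (simp add: field_simps)
  also have "\<dots> = (t * a + b / t) / 2" using assms by (simp add: field_simps power2_eq_square)
  finally show ?thesis .
qed

lemma sqrt_aux:
  fixes a b :: real
  assumes "0 < a" "0 < b"
  shows "exp (ln (a / b) / 2) * b = sqrt (a * b)"
proof -
  have "exp (ln (a / b) / 2) = (a / b) powr (1/2)" using assms by (simp add: powr_def)
  also have "\<dots> = sqrt (a / b)" using assms by (simp add: powr_half_sqrt)
  finally have "exp (ln (a / b) / 2) * b = sqrt (a / b) * (sqrt b * sqrt b)" using assms by simp
  also have "\<dots> = sqrt a * (b / sqrt b)" using assms by (simp add: real_sqrt_divide)
  also have "\<dots> = sqrt (a * b)" using assms by (simp add: real_div_sqrt real_sqrt_mult)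
  finally show ?thesis .
qed

lemma sqrt_aux2:
  fixes a b :: real
  assumes "0 < a" "0 < b"
  shows "exp (- (ln (a / b) / 2)) * a = sqrt (a * b)"
proof -
  have "ln (a / b) = - ln (b / a)" using assms by (simp add: ln_div)
  then have "exp (- (ln (a / b) / 2)) * a = exp (ln (b / a) / 2) * a" by simp
  also have "\<dots> = sqrt (b * a)" using sqrt_aux[OF assms(2,1)] .
  finally show ?thesis by (simp add: mult.commute)
qed

context gp begin

lemma I_holder:
  assumes u: "u \<in> F" and v: "v \<in> F" and m: "\<mu> \<in> M" and s: "0 \<le> s" "s \<le> 1"
  shows "ln (I (\<lambda>\<omega>. (1-s) * u \<omega> + s * v \<omega>) \<mu>) \<le> (1-s) * ln (I u \<mu>) + s * ln (I v \<mu>)"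
proof -
  define Iu where "Iu = I u \<mu>"
  define Iv where "Iv = I v \<mu>"
  define w where "w = (\<lambda>\<omega>. (1-s) * u \<omega> + s * v \<omega>)"
  have Iu: "Iu > 0" unfolding Iu_def using I_pos u m .
  have Iv: "Iv > 0" unfolding Iv_def using I_pos v m .
  have wF: "w \<in> F" unfolding w_def using F_lin[OF u v] .
  define L where "L = (1-s) * ln Iu + s * ln Iv"
  have pw: "exp (w \<omega>) * p \<mu> \<omega> \<le> exp L * ((1-s)/Iu) * (exp (u \<omega>) * p \<mu> \<omega>) + exp L * (s/Iv) * (exp (v \<omega>) * p \<mu> \<omega>)" for \<omega>
  proof -
    define a where "a = u \<omega> - ln Iu"
    define b where "b = v \<omega> - ln Iv"
    have "w \<omega> = L + ((1-s) * a + s * b)" by (simp add: w_def L_def a_def b_def algebra_simps)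
    then have "exp (w \<omega>) = exp L * exp ((1-s) * a + s * b)" by (simp add: exp_add)
    also have "exp ((1-s) * a + s * b) \<le> (1-s) * exp a + s * exp b"
      using convex_onD[OF exp_convex, of s a b] s by simp
    finally have "exp (w \<omega>) \<le> exp L * ((1-s) * exp a + s * exp b)" by simp
    moreover have "exp a = exp (u \<omega>) / Iu" "exp b = exp (v \<omega>) / Iv"
      using Iu Iv by (simp_all add: a_def b_def exp_diff)
    ultimately have "exp (w \<omega>) \<le> exp L * ((1-s)/Iu) * exp (u \<omega>) + exp L * (s/Iv) * exp (v \<omega>)"
      by (simp add: algebra_simps)
    then have "exp (w \<omega>) * p \<mu> \<omega> \<le> (exp L * ((1-s)/Iu) * exp (u \<omega>) + exp L * (s/Iv) * exp (v \<omega>)) * p \<mu> \<omega>"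
      using p_pos[OF m, of \<omega>] by (intro mult_right_mono) auto
    then show ?thesis by (simp add: algebra_simps)
  qed
  have "I w \<mu> \<le> (\<integral>\<omega>. exp L * ((1-s)/Iu) * (exp (u \<omega>) * p \<mu> \<omega>) + exp L * (s/Iv) * (exp (v \<omega>) * p \<mu> \<omega>) \<partial>P)"
    unfolding I_def using pw F_int[OF wF m] F_int[OF u m] F_int[OF v m]
    by (intro integral_mono) auto
  also have "\<dots> = exp L * ((1-s)/Iu) * Iu + exp L * (s/Iv) * Iv"
    using F_int[OF u m] F_int[OF v m] by (simp add: Iu_def Iv_def I_def)
  also have "\<dots> = exp L" using Iu Iv by (simp add: field_simps)
  finally have "I w \<mu> \<le> exp L" .
  then have "ln (I w \<mu>) \<le> L" using I_pos[OF wF m] by (metis exp_gt_zero ln_exp ln_le_cancel_iff)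
  then show ?thesis by (simp add: w_def L_def Iu_def Iv_def)
qed

definition Hf :: "'m \<Rightarrow> 'm \<Rightarrow> real" where
  "Hf \<mu> \<nu> = (\<integral>\<omega>. sqrt (p \<mu> \<omega> * p \<nu> \<omega>) \<partial>P)"

definition hl :: "'m \<Rightarrow> 'm \<Rightarrow> 'w \<Rightarrow> real" where
  "hl \<mu> \<nu> = (\<lambda>\<omega>. ln (p \<mu> \<omega> / p \<nu> \<omega>) / 2)"

lemma hl_F: "\<mu> \<in> M \<Longrightarrow> \<nu> \<in> M \<Longrightarrow> hl \<mu> \<nu> \<in> F"
  unfolding hl_def using F_div[OF F_ratio] by blast

lemma sqrt_fun1: "\<mu> \<in> M \<Longrightarrow> \<nu> \<in> M \<Longrightarrow>
   (\<lambda>\<omega>. sqrt (p \<mu> \<omega> * p \<nu> \<omega>)) = (\<lambda>\<omega>. exp (hl \<mu> \<nu> \<omega>) * p \<nu> \<omega>)"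
  by (rule ext) (simp add: hl_def sqrt_aux p_pos)

lemma sqrt_fun2: "\<mu> \<in> M \<Longrightarrow> \<nu> \<in> M \<Longrightarrow>
   (\<lambda>\<omega>. sqrt (p \<mu> \<omega> * p \<nu> \<omega>)) = (\<lambda>\<omega>. exp (- hl \<mu> \<nu> \<omega>) * p \<mu> \<omega>)"
  by (rule ext) (simp add: hl_def sqrt_aux2 p_pos)

lemma H_eq1: "\<mu> \<in> M \<Longrightarrow> \<nu> \<in> M \<Longrightarrow> Hf \<mu> \<nu> = I (hl \<mu> \<nu>) \<nu>"
  unfolding Hf_def I_def by (simp add: sqrt_fun1)

lemma H_eq2: "\<mu> \<in> M \<Longrightarrow> \<nu> \<in> M \<Longrightarrow> Hf \<mu> \<nu> = I (\<lambda>\<omega>. - hl \<mu> \<nu> \<omega>) \<mu>"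
  unfolding Hf_def I_def by (simp add: sqrt_fun2)

lemma H_pos: "\<mu> \<in> M \<Longrightarrow> \<nu> \<in> M \<Longrightarrow> Hf \<mu> \<nu> > 0"
  using H_eq1 I_pos hl_F by simp

lemma H_int: "\<mu> \<in> M \<Longrightarrow> \<nu> \<in> M \<Longrightarrow> integrable P (\<lambda>\<omega>. sqrt (p \<mu> \<omega> * p \<nu> \<omega>))"
  using sqrt_fun1 F_int hl_F by simp

lemma H_self: "\<mu> \<in> M \<Longrightarrow> Hf \<mu> \<mu> = 1"
  unfolding Hf_def using p_integral p_pos by (simp add: less_imp_le)

lemma H_CS:
  assumes phi: "\<phi> \<in> F" and m: "\<mu> \<in> M" "\<nu> \<in> M"
  shows "2 * ln (Hf \<mu> \<nu>) \<le> ln (I \<phi> \<nu>) + ln (I (\<lambda>\<omega>. - \<phi> \<omega>) \<mu>)"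
proof -
  define I1 where "I1 = I \<phi> \<nu>"
  define I2 where "I2 = I (\<lambda>\<omega>. - \<phi> \<omega>) \<mu>"
  have I1: "I1 > 0" unfolding I1_def using I_pos phi m by simp
  have I2: "I2 > 0" unfolding I2_def using I_pos F_neg[OF phi] m by simp
  define t where "t = sqrt (I2 / I1)"
  have t: "t > 0" using I1 I2 by (simp add: t_def)
  have pw: "sqrt (p \<mu> \<omega> * p \<nu> \<omega>) \<le> (t/2) * (exp (\<phi> \<omega>) * p \<nu> \<omega>) + (1/(2*t)) * (exp (- \<phi> \<omega>) * p \<mu> \<omega>)" for \<omega>
  proof -
    have "p \<mu> \<omega> * p \<nu> \<omega> = (exp (\<phi> \<omega>) * p \<nu> \<omega>) * (exp (- \<phi> \<omega>) * p \<mu> \<omega>)"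
      by (simp add: exp_minus field_simps)
    then have "sqrt (p \<mu> \<omega> * p \<nu> \<omega>) = sqrt ((exp (\<phi> \<omega>) * p \<nu> \<omega>) * (exp (- \<phi> \<omega>) * p \<mu> \<omega>))"
      by (rule arg_cong)
    also have "\<dots> \<le> (t * (exp (\<phi> \<omega>) * p \<nu> \<omega>) + (exp (- \<phi> \<omega>) * p \<mu> \<omega>) / t) / 2"
      using amgm_t[of "exp (\<phi> \<omega>) * p \<nu> \<omega>" "exp (- \<phi> \<omega>) * p \<mu> \<omega>" t] p_pos m t
      by (simp add: less_imp_le)
    finally show ?thesis by (simp add: field_simps)
  qed
  have "Hf \<mu> \<nu> \<le> (\<integral>\<omega>. (t/2) * (exp (\<phi> \<omega>) * p \<nu> \<omega>) + (1/(2*t)) * (exp (- \<phi> \<omega>) * p \<mu> \<omega>) \<partial>P)"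
    unfolding Hf_def using pw H_int[OF m] F_int[OF phi m(2)] F_int[OF F_neg[OF phi] m(1)]
    by (intro integral_mono) auto
  also have "\<dots> = (t/2) * I1 + (1/(2*t)) * I2"
    using F_int[OF phi m(2)] F_int[OF F_neg[OF phi] m(1)] by (simp add: I1_def I2_def I_def)
  also have "\<dots> = sqrt (I1 * I2)"
  proof -
    have tt: "t * t = I2 / I1" using I1 I2 by (simp add: t_def)
    have "sqrt (I1 * I2) = t * I1" using I1 I2 t
      by (simp add: t_def real_sqrt_mult real_sqrt_divide field_simps)
    moreover have "I2 / t = t * I1" using tt t I1 by (simp add: field_simps)
    ultimately show ?thesis using t by (simp add: field_simps)
  qed
  finally have "Hf \<mu> \<nu> \<le> sqrt (I1 * I2)" .
  then have "ln (Hf \<mu> \<nu>) \<le> ln (sqrt (I1 * I2))" using H_pos[OF m] I1 I2 by simp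
  also have "\<dots> = (ln I1 + ln I2) / 2" using I1 I2 by (simp add: ln_sqrt ln_mult)
  finally show ?thesis by (simp add: I1_def I2_def)
qed

end


context gp begin

lemma pind_int: "\<mu> \<in> M \<Longrightarrow> E \<in> sets P \<Longrightarrow> integrable P (\<lambda>\<omega>. p \<mu> \<omega> * indicator E \<omega>)"
  using integrable_mult_indicator[of E P "p \<mu>"] p_int by (simp add: mult.commute)

lemma dens_meas:
  assumes m: "\<mu> \<in> M" and E: "E \<in> sets P"
  shows "measure (density P (\<lambda>\<omega>. ennreal (p \<mu> \<omega>))) E = (\<integral>\<omega>. p \<mu> \<omega> * indicator E \<omega> \<partial>P)"
proof -
  have pm: "(\<lambda>\<omega>. ennreal (p \<mu> \<omega>)) \<in> borel_measurable P" using p_meas[OF m] by measurable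
  have "measure (density P (\<lambda>\<omega>. ennreal (p \<mu> \<omega>))) E
      = enn2real (\<integral>\<^sup>+ \<omega>. ennreal (p \<mu> \<omega>) * indicator E \<omega> \<partial>P)"
    unfolding measure_def using emeasure_density[OF pm E] by simp
  also have "\<dots> = (\<integral>\<omega>. p \<mu> \<omega> * indicator E \<omega> \<partial>P)"
  proof (rule enn2real_nn_integral_eq_integral)
    show "AE \<omega> in P. ennreal (p \<mu> \<omega>) * indicator E \<omega> = ennreal (p \<mu> \<omega> * indicator E \<omega>)"
      by (rule AE_I2) (simp split: split_indicator)
    show "AE \<omega> in P. 0 \<le> p \<mu> \<omega> * indicator E \<omega>"
      by (rule AE_I2) (simp add: p_pos[OF m] less_imp_le)
    show "(\<lambda>\<omega>. p \<mu> \<omega> * indicator E \<omega>) \<in> borel_measurable P"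
      using p_meas[OF m] E by measurable
  qed
  finally show ?thesis .
qed

lemma pind_le1: "\<mu> \<in> M \<Longrightarrow> E \<in> sets P \<Longrightarrow> (\<integral>\<omega>. p \<mu> \<omega> * indicator E \<omega> \<partial>P) \<le> 1"
proof -
  assume m: "\<mu> \<in> M" and E: "E \<in> sets P"
  have "(\<integral>\<omega>. p \<mu> \<omega> * indicator E \<omega> \<partial>P) \<le> (\<integral>\<omega>. p \<mu> \<omega> \<partial>P)"
    using pind_int[OF m E] p_int[OF m] p_pos[OF m]
    by (intro integral_mono) (auto split: split_indicator simp: less_imp_le)
  then show ?thesis using p_integral[OF m] by simp
qed

lemma testing:
  assumes m: "\<mu> \<in> M" "\<nu> \<in> M" and E: "E1 \<in> sets P" "E2 \<in> sets P"
    and cov: "\<And>\<omega>. \<omega> \<in> E1 \<or> \<omega> \<in> E2" and eps: "0 < \<epsilon>"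
    and m1: "(\<integral>\<omega>. p \<mu> \<omega> * indicator E1 \<omega> \<partial>P) < \<epsilon>"
    and m2: "(\<integral>\<omega>. p \<nu> \<omega> * indicator E2 \<omega> \<partial>P) < \<epsilon>"
  shows "Hf \<mu> \<nu> < 2 * sqrt \<epsilon>"
proof -
  define s where "s = sqrt \<epsilon>"
  have s: "s > 0" using eps by (simp add: s_def)
  have ss: "s * s = \<epsilon>" using eps by (simp add: s_def)
  define f where "f = (\<lambda>\<omega>. (1/(2 * s)) * (p \<mu> \<omega> * indicator E1 \<omega>) + (s/2) * (p \<nu> \<omega> * indicator E1 \<omega>)
     + (1/(2 * s)) * (p \<nu> \<omega> * indicator E2 \<omega>) + (s/2) * (p \<mu> \<omega> * indicator E2 \<omega>))"
  have pw: "sqrt (p \<mu> \<omega> * p \<nu> \<omega>) \<le> f \<omega>" for \<omega>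
  proof -
    have a: "0 \<le> p \<mu> \<omega>" "0 \<le> p \<nu> \<omega>" using p_pos m less_imp_le by auto
    have t: "1/s > 0" using s by simp
    have A: "sqrt (p \<mu> \<omega> * p \<nu> \<omega>) \<le> (1/(2 * s)) * p \<mu> \<omega> + (s/2) * p \<nu> \<omega>"
      using amgm_t[OF a t] s by (simp add: field_simps)
    have B: "sqrt (p \<mu> \<omega> * p \<nu> \<omega>) \<le> (1/(2 * s)) * p \<nu> \<omega> + (s/2) * p \<mu> \<omega>"
      using amgm_t[OF a(2,1) t] s by (simp add: field_simps mult.commute)
    have nn: "0 \<le> (1/(2 * s)) * p \<mu> \<omega> + (s/2) * p \<nu> \<omega>" "0 \<le> (1/(2 * s)) * p \<nu> \<omega> + (s/2) * p \<mu> \<omega>"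
      using a s by auto
    show ?thesis
      using cov[of \<omega>] A B nn by (auto simp: f_def split: split_indicator)
  qed
  have ints: "integrable P (\<lambda>\<omega>. p \<mu> \<omega> * indicator E1 \<omega>)" "integrable P (\<lambda>\<omega>. p \<nu> \<omega> * indicator E1 \<omega>)"
     "integrable P (\<lambda>\<omega>. p \<nu> \<omega> * indicator E2 \<omega>)" "integrable P (\<lambda>\<omega>. p \<mu> \<omega> * indicator E2 \<omega>)"
    using pind_int m E by auto
  have "Hf \<mu> \<nu> \<le> integral\<^sup>L P f"
    unfolding Hf_def using pw H_int[OF m] ints unfolding f_def by (intro integral_mono) auto
  also have "integral\<^sup>L P f = (1/(2 * s)) * (\<integral>\<omega>. p \<mu> \<omega> * indicator E1 \<omega> \<partial>P)
      + (s/2) * (\<integral>\<omega>. p \<nu> \<omega> * indicator E1 \<omega> \<partial>P)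
      + (1/(2 * s)) * (\<integral>\<omega>. p \<nu> \<omega> * indicator E2 \<omega> \<partial>P)
      + (s/2) * (\<integral>\<omega>. p \<mu> \<omega> * indicator E2 \<omega> \<partial>P)"
    unfolding f_def using ints by simp
  also have "\<dots> < (1/(2 * s)) * \<epsilon> + (s/2) * 1 + (1/(2 * s)) * \<epsilon> + (s/2) * 1"
  proof -
    have "(1/(2 * s)) * (\<integral>\<omega>. p \<mu> \<omega> * indicator E1 \<omega> \<partial>P) < (1/(2 * s)) * \<epsilon>"
      using m1 s by (simp add: divide_strict_right_mono)
    moreover have "(1/(2 * s)) * (\<integral>\<omega>. p \<nu> \<omega> * indicator E2 \<omega> \<partial>P) < (1/(2 * s)) * \<epsilon>"
      using m2 s by (simp add: divide_strict_right_mono)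
    moreover have "(s/2) * (\<integral>\<omega>. p \<nu> \<omega> * indicator E1 \<omega> \<partial>P) \<le> (s/2) * 1"
      using pind_le1[OF m(2) E(1)] s by (intro mult_left_mono) auto
    moreover have "(s/2) * (\<integral>\<omega>. p \<mu> \<omega> * indicator E2 \<omega> \<partial>P) \<le> (s/2) * 1"
      using pind_le1[OF m(1) E(2)] s by (intro mult_left_mono) auto
    ultimately show ?thesis by linarith
  qed
  also have "\<dots> = 2 * s" using s ss by (simp add: field_simps)
  finally show ?thesis by (simp add: s_def)
qed

end


lemma affine_comb:
  assumes "linear L" "A = (\<lambda>x. L x + b)"
  shows "A ((1 - t) *\<^sub>R x + t *\<^sub>R y) = (1 - t) *\<^sub>R A x + t *\<^sub>R A y"
proof -
  have "L ((1 - t) *\<^sub>R x + t *\<^sub>R y) = (1 - t) *\<^sub>R L x + t *\<^sub>R L y"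
    using assms(1) by (simp add: linear_add linear_scale)
  moreover have "b = (1 - t) *\<^sub>R b + t *\<^sub>R b" by (simp add: scaleR_left_diff_distrib)
  ultimately show ?thesis using assms(2) by (simp add: algebra_simps)
qed

context gp begin

lemma Phi_I: "Phi_r P p A g r x y \<phi> \<alpha> =
   g \<bullet> x - g \<bullet> y + \<alpha> * ln (I (\<lambda>\<omega>. \<phi> \<omega> / \<alpha>) (A y)) + \<alpha> * ln (I (\<lambda>\<omega>. - \<phi> \<omega> / \<alpha>) (A x)) + 2 * \<alpha> * r"
  unfolding Phi_r_def I_def by simp

lemma conc_comp:
  fixes A :: "'n::euclidean_space \<Rightarrow> 'm"
  assumes psi: "\<psi> \<in> F" and aff: "linear L" "A = (\<lambda>x. L x + b)" and X: "convex X" and AX: "A ` X \<subseteq> M"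
  shows "concave_on X (\<lambda>x. ln (I \<psi> (A x)))"
  unfolding concave_on_iff
proof (intro conjI X ballI allI impI)
  fix x y and u v :: real
  assume xy: "x \<in> X" "y \<in> X" and uv0: "0 \<le> u" "0 \<le> v" "u + v = 1"
  hence uv: "0 \<le> u \<and> 0 \<le> v \<and> u + v = 1" by simp
  have u: "u = 1 - v" using uv by simp
  have eq: "A (u *\<^sub>R x + v *\<^sub>R y) = u *\<^sub>R A x + v *\<^sub>R A y"
    unfolding u by (rule affine_comb[OF aff])
  have "A x \<in> M" "A y \<in> M" using AX xy by auto
  then show "u * ln (I \<psi> (A x)) + v * ln (I \<psi> (A y)) \<le> ln (I \<psi> (A (u *\<^sub>R x + v *\<^sub>R y)))"
    unfolding eq using F_conc[OF psi] uv unfolding concave_on_iff by blast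
qed

lemma cont_comp:
  fixes A :: "'n::euclidean_space \<Rightarrow> 'm"
  assumes psi: "\<psi> \<in> F" and aff: "linear L" "A = (\<lambda>x. L x + b)" and AX: "A ` X \<subseteq> M"
  shows "continuous_on X (\<lambda>x. ln (I \<psi> (A x)))"
proof -
  have "convex_on M (\<lambda>\<mu>. - ln (I \<psi> \<mu>))" using F_conc[OF psi] by (simp add: concave_on_def)
  then have "continuous_on M (\<lambda>\<mu>. - ln (I \<psi> \<mu>))" using convex_on_continuous M_open by blast
  then have cM: "continuous_on M (\<lambda>\<mu>. ln (I \<psi> \<mu>))" using continuous_on_minus by fastforce
  have "continuous_on X L" using aff(1) linear_conv_bounded_linear linear_continuous_on by blast
  then have cA: "continuous_on X A" unfolding aff(2) by (intro continuous_intros)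
  show ?thesis using continuous_on_compose2[OF cM cA AX] .
qed

lemma persp:
  assumes f1: "\<phi>1 \<in> F" and f2: "\<phi>2 \<in> F" and a: "\<alpha>1 > 0" "\<alpha>2 > 0" and m: "\<mu> \<in> M"
    and t: "0 \<le> t" "t \<le> 1"
  shows "((1-t) * \<alpha>1 + t * \<alpha>2) * ln (I (\<lambda>\<omega>. ((1-t) * \<phi>1 \<omega> + t * \<phi>2 \<omega>) / ((1-t) * \<alpha>1 + t * \<alpha>2)) \<mu>)
     \<le> (1-t) * \<alpha>1 * ln (I (\<lambda>\<omega>. \<phi>1 \<omega> / \<alpha>1) \<mu>) + t * \<alpha>2 * ln (I (\<lambda>\<omega>. \<phi>2 \<omega> / \<alpha>2) \<mu>)"
proof -
  define \<alpha> where "\<alpha> = (1-t) * \<alpha>1 + t * \<alpha>2"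
  have apos: "\<alpha> > 0"
  proof (cases "t = 0")
    case True then show ?thesis using a by (simp add: \<alpha>_def)
  next
    case False then have "t * \<alpha>2 > 0" using t a by simp
    moreover have "(1-t) * \<alpha>1 \<ge> 0" using t a by simp
    ultimately show ?thesis by (simp add: \<alpha>_def)
  qed
  define s where "s = t * \<alpha>2 / \<alpha>"
  have s0: "0 \<le> s" using t a apos by (simp add: s_def)
  have s1: "s \<le> 1" using t a apos by (simp add: s_def \<alpha>_def field_simps)
  have oms: "1 - s = (1-t) * \<alpha>1 / \<alpha>" using apos by (simp add: s_def \<alpha>_def field_simps)
  have u: "(\<lambda>\<omega>. \<phi>1 \<omega> / \<alpha>1) \<in> F" and v: "(\<lambda>\<omega>. \<phi>2 \<omega> / \<alpha>2) \<in> F" using F_div f1 f2 by auto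
  have eqf: "(\<lambda>\<omega>. ((1-t) * \<phi>1 \<omega> + t * \<phi>2 \<omega>) / \<alpha>) = (\<lambda>\<omega>. (1-s) * (\<phi>1 \<omega> / \<alpha>1) + s * (\<phi>2 \<omega> / \<alpha>2))"
  proof (rule ext)
    fix \<omega>
    have "(1-s) * (\<phi>1 \<omega> / \<alpha>1) + s * (\<phi>2 \<omega> / \<alpha>2)
        = ((1-t) * \<alpha>1 / \<alpha>) * (\<phi>1 \<omega> / \<alpha>1) + (t * \<alpha>2 / \<alpha>) * (\<phi>2 \<omega> / \<alpha>2)"
      by (subst oms, simp add: s_def)
    also have "\<dots> = ((1-t) * \<phi>1 \<omega> + t * \<phi>2 \<omega>) / \<alpha>"
      using a apos by (simp add: field_simps)
    finally show "((1-t) * \<phi>1 \<omega> + t * \<phi>2 \<omega>) / \<alpha> = (1-s) * (\<phi>1 \<omega> / \<alpha>1) + s * (\<phi>2 \<omega> / \<alpha>2)" by simp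
  qed
  have "ln (I (\<lambda>\<omega>. ((1-t) * \<phi>1 \<omega> + t * \<phi>2 \<omega>) / \<alpha>) \<mu>)
      \<le> (1-s) * ln (I (\<lambda>\<omega>. \<phi>1 \<omega> / \<alpha>1) \<mu>) + s * ln (I (\<lambda>\<omega>. \<phi>2 \<omega> / \<alpha>2) \<mu>)"
    unfolding eqf using I_holder[OF u v m s0 s1] .
  then have "\<alpha> * ln (I (\<lambda>\<omega>. ((1-t) * \<phi>1 \<omega> + t * \<phi>2 \<omega>) / \<alpha>) \<mu>)
      \<le> \<alpha> * ((1-s) * ln (I (\<lambda>\<omega>. \<phi>1 \<omega> / \<alpha>1) \<mu>) + s * ln (I (\<lambda>\<omega>. \<phi>2 \<omega> / \<alpha>2) \<mu>))"
    using apos by (intro mult_left_mono) auto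
  also have "\<dots> = (\<alpha> * (1-s)) * ln (I (\<lambda>\<omega>. \<phi>1 \<omega> / \<alpha>1) \<mu>) + (\<alpha> * s) * ln (I (\<lambda>\<omega>. \<phi>2 \<omega> / \<alpha>2) \<mu>)"
    by (simp add: algebra_simps)
  also have "\<alpha> * (1-s) = (1-t) * \<alpha>1" using apos by (simp add: oms)
  also have "\<alpha> * s = t * \<alpha>2" using apos by (simp add: s_def)
  finally show ?thesis by (simp add: \<alpha>_def)
qed

lemma H_concave:
  fixes A :: "'n::euclidean_space \<Rightarrow> 'm"
  assumes aff: "linear L" "A = (\<lambda>x. L x + b)" and X: "convex X" and AX: "A ` X \<subseteq> M"
    and xy: "x \<in> X" "y \<in> X" and l: "0 \<le> l" "l \<le> 1"
  shows "l * ln (Hf (A x) (A y)) \<le> ln (Hf (A ((1 - l) *\<^sub>R y + l *\<^sub>R x)) (A y))"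
proof -
  define x' where "x' = (1 - l) *\<^sub>R y + l *\<^sub>R x"
  have x'X: "x' \<in> X" using X xy l unfolding x'_def convex_def by (metis diff_ge_0_iff_ge add_diff_cancel_left' diff_add_cancel)
  have mx: "A x \<in> M" and my: "A y \<in> M" and mx': "A x' \<in> M" using AX xy x'X by auto
  define \<phi> where "\<phi> = hl (A x') (A y)"
  have phiF: "\<phi> \<in> F" unfolding \<phi>_def using hl_F mx' my by simp
  have mphiF: "(\<lambda>\<omega>. - \<phi> \<omega>) \<in> F" using F_neg[OF phiF] .
  have e1: "Hf (A x') (A y) = I \<phi> (A y)" unfolding \<phi>_def using H_eq1 mx' my by simp
  have e2: "Hf (A x') (A y) = I (\<lambda>\<omega>. - \<phi> \<omega>) (A x')" unfolding \<phi>_def using H_eq2 mx' my by simp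
  have conc: "ln (I (\<lambda>\<omega>. - \<phi> \<omega>) (A x')) \<ge> (1 - l) * ln (I (\<lambda>\<omega>. - \<phi> \<omega>) (A y)) + l * ln (I (\<lambda>\<omega>. - \<phi> \<omega>) (A x))"
    using concave_onD[OF F_conc[OF mphiF], of l "A y" "A x"] l my mx affine_comb[OF aff, of l y x]
    unfolding x'_def by simp
  have cs1: "2 * ln (Hf (A x) (A y)) \<le> ln (I \<phi> (A y)) + ln (I (\<lambda>\<omega>. - \<phi> \<omega>) (A x))"
    using H_CS[OF phiF mx my] .
  have cs2: "2 * ln (Hf (A y) (A y)) \<le> ln (I \<phi> (A y)) + ln (I (\<lambda>\<omega>. - \<phi> \<omega>) (A y))"
    using H_CS[OF phiF my my] .
  then have cs2': "0 \<le> ln (I \<phi> (A y)) + ln (I (\<lambda>\<omega>. - \<phi> \<omega>) (A y))" using H_self[OF my] by simp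
  have "2 * ln (Hf (A x') (A y)) = ln (I \<phi> (A y)) + ln (I (\<lambda>\<omega>. - \<phi> \<omega>) (A x'))"
    using e1 e2 by simp
  also have "\<dots> \<ge> l * (ln (I \<phi> (A y)) + ln (I (\<lambda>\<omega>. - \<phi> \<omega>) (A x)))
                 + (1 - l) * (ln (I \<phi> (A y)) + ln (I (\<lambda>\<omega>. - \<phi> \<omega>) (A y)))"
    using conc by (simp add: algebra_simps)
  finally have "2 * ln (Hf (A x') (A y)) \<ge> l * (ln (I \<phi> (A y)) + ln (I (\<lambda>\<omega>. - \<phi> \<omega>) (A x)))
                 + (1 - l) * (ln (I \<phi> (A y)) + ln (I (\<lambda>\<omega>. - \<phi> \<omega>) (A y)))" .
  moreover have "l * (2 * ln (Hf (A x) (A y))) \<le> l * (ln (I \<phi> (A y)) + ln (I (\<lambda>\<omega>. - \<phi> \<omega>) (A x)))"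
    using cs1 l by (intro mult_left_mono) auto
  moreover have "0 \<le> (1 - l) * (ln (I \<phi> (A y)) + ln (I (\<lambda>\<omega>. - \<phi> \<omega>) (A y)))"
    using cs2' l by simp
  ultimately show ?thesis unfolding x'_def by linarith
qed

end


context gp begin

lemma Phi_cont:
  fixes A :: "'n::euclidean_space \<Rightarrow> 'm" and g :: 'n
  assumes phi: "\<phi> \<in> F" and aff: "linear L" "A = (\<lambda>x. L x + b)" and AX: "A ` X \<subseteq> M"
  shows "continuous_on (X \<times> X) (\<lambda>z. Phi_r P p A g r (fst z) (snd z) \<phi> \<alpha>)"
proof -
  have c1: "continuous_on (X \<times> X) (\<lambda>z. ln (I (\<lambda>\<omega>. \<phi> \<omega> / \<alpha>) (A (snd z))))"
    by (rule continuous_on_compose2[OF cont_comp[OF F_div[OF phi] aff AX] continuous_on_snd]) auto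
  have c2: "continuous_on (X \<times> X) (\<lambda>z. ln (I (\<lambda>\<omega>. - \<phi> \<omega> / \<alpha>) (A (fst z))))"
    by (rule continuous_on_compose2[OF cont_comp[OF F_negdiv[OF phi] aff AX] continuous_on_fst]) auto
  have c0: "continuous_on (X \<times> X) (\<lambda>z. g \<bullet> fst z - g \<bullet> snd z)" by (intro continuous_intros)
  show ?thesis unfolding Phi_I
    by (intro continuous_on_add continuous_on_mult_left c0 c1 c2 continuous_on_const)
qed

lemma Phi_conc:
  fixes A :: "'n::euclidean_space \<Rightarrow> 'm" and g :: 'n
  assumes phi: "\<phi> \<in> F" and a: "\<alpha> > 0" and aff: "linear L" "A = (\<lambda>x. L x + b)" and X: "convex X"
    and AX: "A ` X \<subseteq> M"
  shows "concave_on (X \<times> X) (\<lambda>z. Phi_r P p A g r (fst z) (snd z) \<phi> \<alpha>)"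
  unfolding concave_on_iff
proof (intro conjI ballI allI impI)
  show "convex (X \<times> X)" by (rule convex_Times[OF X X])
  fix z1 z2 and u v :: real
  assume z: "z1 \<in> X \<times> X" "z2 \<in> X \<times> X" and uv: "0 \<le> u" "0 \<le> v" "u + v = 1"
  define G1 where "G1 = (\<lambda>x. ln (I (\<lambda>\<omega>. \<phi> \<omega> / \<alpha>) (A x)))"
  define G2 where "G2 = (\<lambda>x. ln (I (\<lambda>\<omega>. - \<phi> \<omega> / \<alpha>) (A x)))"
  have cG1: "concave_on X G1" unfolding G1_def using conc_comp[OF F_div[OF phi] aff X AX] .
  have cG2: "concave_on X G2" unfolding G2_def using conc_comp[OF F_negdiv[OF phi] aff X AX] .
  have f: "fst z1 \<in> X" "fst z2 \<in> X" "snd z1 \<in> X" "snd z2 \<in> X" using z by auto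
  have i1: "G1 (u *\<^sub>R snd z1 + v *\<^sub>R snd z2) \<ge> u * G1 (snd z1) + v * G1 (snd z2)"
    using cG1 f uv unfolding concave_on_iff by blast
  have i2: "G2 (u *\<^sub>R fst z1 + v *\<^sub>R fst z2) \<ge> u * G2 (fst z1) + v * G2 (fst z2)"
    using cG2 f uv unfolding concave_on_iff by blast
  have i1': "\<alpha> * G1 (u *\<^sub>R snd z1 + v *\<^sub>R snd z2) \<ge> \<alpha> * (u * G1 (snd z1) + v * G1 (snd z2))"
    using i1 a by (intro mult_left_mono) auto
  have i2': "\<alpha> * G2 (u *\<^sub>R fst z1 + v *\<^sub>R fst z2) \<ge> \<alpha> * (u * G2 (fst z1) + v * G2 (fst z2))"
    using i2 a by (intro mult_left_mono) auto
  have lin: "g \<bullet> (u *\<^sub>R fst z1 + v *\<^sub>R fst z2) - g \<bullet> (u *\<^sub>R snd z1 + v *\<^sub>R snd z2)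
      = u * (g \<bullet> fst z1 - g \<bullet> snd z1) + v * (g \<bullet> fst z2 - g \<bullet> snd z2)"
    by (simp add: inner_add_right algebra_simps)
  have rr: "2 * \<alpha> * r = u * (2 * \<alpha> * r) + v * (2 * \<alpha> * r)" using uv(3) by (metis distrib_right mult_1)
  have "u * Phi_r P p A g r (fst z1) (snd z1) \<phi> \<alpha> + v * Phi_r P p A g r (fst z2) (snd z2) \<phi> \<alpha>
     = (u * (g \<bullet> fst z1 - g \<bullet> snd z1) + v * (g \<bullet> fst z2 - g \<bullet> snd z2))
       + \<alpha> * (u * G1 (snd z1) + v * G1 (snd z2)) + \<alpha> * (u * G2 (fst z1) + v * G2 (fst z2))
       + (u * (2 * \<alpha> * r) + v * (2 * \<alpha> * r))"
    unfolding Phi_I G1_def G2_def by (simp add: algebra_simps)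
  also have "\<dots> \<le> Phi_r P p A g r (fst (u *\<^sub>R z1 + v *\<^sub>R z2)) (snd (u *\<^sub>R z1 + v *\<^sub>R z2)) \<phi> \<alpha>"
    unfolding Phi_I using i1' i2' lin rr by (simp add: G1_def G2_def)
  finally show "u * Phi_r P p A g r (fst z1) (snd z1) \<phi> \<alpha> + v * Phi_r P p A g r (fst z2) (snd z2) \<phi> \<alpha>
     \<le> Phi_r P p A g r (fst (u *\<^sub>R z1 + v *\<^sub>R z2)) (snd (u *\<^sub>R z1 + v *\<^sub>R z2)) \<phi> \<alpha>" .
qed

lemma Phi_mix:
  fixes A :: "'n::euclidean_space \<Rightarrow> 'm" and g :: 'n
  assumes f1: "\<phi>1 \<in> F" and f2: "\<phi>2 \<in> F" and a: "\<alpha>1 > 0" "\<alpha>2 > 0" and t: "0 \<le> t" "t \<le> 1"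
    and mx: "A x \<in> M" and my: "A y \<in> M"
  shows "Phi_r P p A g r x y (\<lambda>\<omega>. (1-t) * \<phi>1 \<omega> + t * \<phi>2 \<omega>) ((1-t) * \<alpha>1 + t * \<alpha>2)
     \<le> (1-t) * Phi_r P p A g r x y \<phi>1 \<alpha>1 + t * Phi_r P p A g r x y \<phi>2 \<alpha>2"
proof -
  define \<alpha> where "\<alpha> = (1-t) * \<alpha>1 + t * \<alpha>2"
  have p1: "\<alpha> * ln (I (\<lambda>\<omega>. ((1-t) * \<phi>1 \<omega> + t * \<phi>2 \<omega>) / \<alpha>) (A y))
     \<le> (1-t) * \<alpha>1 * ln (I (\<lambda>\<omega>. \<phi>1 \<omega> / \<alpha>1) (A y)) + t * \<alpha>2 * ln (I (\<lambda>\<omega>. \<phi>2 \<omega> / \<alpha>2) (A y))"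
    unfolding \<alpha>_def using persp[OF f1 f2 a my t] .
  have p2: "\<alpha> * ln (I (\<lambda>\<omega>. ((1-t) * (- \<phi>1 \<omega>) + t * (- \<phi>2 \<omega>)) / \<alpha>) (A x))
     \<le> (1-t) * \<alpha>1 * ln (I (\<lambda>\<omega>. - \<phi>1 \<omega> / \<alpha>1) (A x)) + t * \<alpha>2 * ln (I (\<lambda>\<omega>. - \<phi>2 \<omega> / \<alpha>2) (A x))"
    unfolding \<alpha>_def using persp[OF F_neg[OF f1] F_neg[OF f2] a mx t] by simp
  have e2: "(\<lambda>\<omega>. ((1-t) * (- \<phi>1 \<omega>) + t * (- \<phi>2 \<omega>)) / \<alpha>) = (\<lambda>\<omega>. - ((1-t) * \<phi>1 \<omega> + t * \<phi>2 \<omega>) / \<alpha>)"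
    by (rule ext) (simp add: algebra_simps)
  have rr: "2 * \<alpha> * r = (1-t) * (2 * \<alpha>1 * r) + t * (2 * \<alpha>2 * r)" by (simp add: \<alpha>_def algebra_simps)
  have gg: "g \<bullet> x - g \<bullet> y = (1-t) * (g \<bullet> x - g \<bullet> y) + t * (g \<bullet> x - g \<bullet> y)" by (simp add: algebra_simps)
  show ?thesis
    unfolding Phi_I \<alpha>_def[symmetric] using p1 p2 rr gg unfolding e2 by (simp add: algebra_simps)
qed

end


context gp begin

lemma main:
  fixes X :: "'n::euclidean_space set" and A :: "'n \<Rightarrow> 'm" and g :: 'n and ghat :: "'w \<Rightarrow> real"
  assumes X: "compact X" "convex X" "X \<noteq> {}" and aff: "linear L" "A = (\<lambda>x. L x + b)"
    and AX: "A ` X \<subseteq> M"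
    and d: "0 < \<delta>" "\<delta> < 1" and r: "ln (1/\<delta>) \<le> r"
    and gh: "ghat \<in> borel_measurable P"
    and sup: "(SUP x\<in>X. ereal (miss_prob P p A g ghat x \<delta>0)) < ereal (\<delta>^2/4)"
  shows "ereal (ln (1/\<delta>) / r) * Phi_star P p A X F g r \<le> ereal \<delta>0"
proof -
  define r' where "r' = ln (1/\<delta>)"
  have r'pos: "r' > 0" using d by (simp add: r'_def)
  have rpos: "r > 0" using r r'pos r'_def by simp
  define l where "l = r' / r"
  have l: "0 < l" "l \<le> 1" using r'pos rpos r by (simp_all add: l_def r'_def)
  define eps where "eps = \<delta>^2/4"
  have eps: "eps > 0" using d by (simp add: eps_def)
  have seps: "2 * sqrt eps = \<delta>"
  proof -
    have "sqrt eps = sqrt ((\<delta>/2)^2)" by (simp add: eps_def power_divide)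
    also have "\<dots> = \<delta>/2" using d by simp
    finally show ?thesis by simp
  qed
  have miss: "miss_prob P p A g ghat x \<delta>0 < eps" if "x \<in> X" for x
  proof -
    have "ereal (miss_prob P p A g ghat x \<delta>0) \<le> (SUP x\<in>X. ereal (miss_prob P p A g ghat x \<delta>0))"
      using that by (rule SUP_upper)
    also have "\<dots> < ereal eps" using sup by (simp add: eps_def)
    finally show ?thesis by simp
  qed
  have claimT: "l * (g \<bullet> x - g \<bullet> y) \<le> 2 * \<delta>0"
    if xy: "x \<in> X" "y \<in> X" and k: "ln (Hf (A x) (A y)) + r \<ge> 0" for x y
  proof (rule ccontr)
    assume "\<not> l * (g \<bullet> x - g \<bullet> y) \<le> 2 * \<delta>0"
    then have big: "l * (g \<bullet> x - g \<bullet> y) > 2 * \<delta>0" by simp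
    define x' where "x' = (1 - l) *\<^sub>R y + l *\<^sub>R x"
    have x'X: "x' \<in> X" using X(2) xy l unfolding x'_def convex_def by simp
    have gx': "g \<bullet> x' - g \<bullet> y = l * (g \<bullet> x - g \<bullet> y)"
      by (simp add: x'_def inner_add_right algebra_simps)
    have mx': "A x' \<in> M" and my: "A y \<in> M" and mx: "A x \<in> M" using AX x'X xy by auto
    define E1 where "E1 = {\<omega> \<in> space P. \<bar>ghat \<omega> - g \<bullet> x'\<bar> > \<delta>0}"
    define E2 where "E2 = {\<omega> \<in> space P. \<bar>ghat \<omega> - g \<bullet> y\<bar> > \<delta>0}"
    have E1: "E1 \<in> sets P" unfolding E1_def using gh by measurable
    have E2: "E2 \<in> sets P" unfolding E2_def using gh by measurable
    have cov: "\<omega> \<in> E1 \<or> \<omega> \<in> E2" for \<omega>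
    proof (rule ccontr)
      assume "\<not> (\<omega> \<in> E1 \<or> \<omega> \<in> E2)"
      then have "\<bar>ghat \<omega> - g \<bullet> x'\<bar> \<le> \<delta>0" "\<bar>ghat \<omega> - g \<bullet> y\<bar> \<le> \<delta>0"
        by (auto simp: E1_def E2_def space_P)
      then have "g \<bullet> x' - g \<bullet> y \<le> 2 * \<delta>0" by linarith
      then show False using gx' big by simp
    qed
    have m1: "(\<integral>\<omega>. p (A x') \<omega> * indicator E1 \<omega> \<partial>P) < eps"
      using miss[OF x'X] dens_meas[OF mx' E1] unfolding miss_prob_def E1_def by simp
    have m2: "(\<integral>\<omega>. p (A y) \<omega> * indicator E2 \<omega> \<partial>P) < eps"
      using miss[OF xy(2)] dens_meas[OF my E2] unfolding miss_prob_def E2_def by simp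
    have Hlt: "Hf (A x') (A y) < \<delta>" using testing[OF mx' my E1 E2 cov eps m1 m2] seps by simp
    have "l * ln (Hf (A x) (A y)) \<le> ln (Hf (A x') (A y))"
      unfolding x'_def using H_concave[OF aff X(2) AX xy less_imp_le[OF l(1)] l(2)] .
    moreover have "l * ln (Hf (A x) (A y)) \<ge> l * (- r)" using k l by (intro mult_left_mono) auto
    moreover have "l * (- r) = ln \<delta>" using rpos d by (simp add: l_def r'_def ln_div)
    ultimately have "ln \<delta> \<le> ln (Hf (A x') (A y))" by linarith
    then have "\<delta> \<le> Hf (A x') (A y)" using d H_pos[OF mx' my] by simp
    then show False using Hlt by simp
  qed
  define f where "f = (\<lambda>z (\<theta> :: ('w \<Rightarrow> real) \<times> real). Phi_r P p A g r (fst z) (snd z) (fst \<theta>) (snd \<theta>))"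
  define \<Theta> where "\<Theta> = F \<times> {0::real<..}"
  define mix where "mix = (\<lambda>t (a :: ('w \<Rightarrow> real) \<times> real) b. ((\<lambda>\<omega>. (1-t) * fst a \<omega> + t * fst b \<omega>), (1-t) * snd a + t * snd b))"
  have K: "\<exists>\<theta>\<in>\<Theta>. \<forall>z\<in>X \<times> X. f z \<theta> < c" if c: "c > 2 * \<delta>0 / l" for c
  proof (rule minimax_abstract[where mix = mix])
    show "compact (X \<times> X)" using X(1) by (rule compact_Times[OF _ X(1)])
    show "convex (X \<times> X)" by (rule convex_Times[OF X(2) X(2)])
    show "\<forall>\<theta>\<in>\<Theta>. continuous_on (X \<times> X) (\<lambda>y. f y \<theta>)"
      unfolding f_def \<Theta>_def using Phi_cont[OF _ aff AX] by auto
    show "\<forall>\<theta>\<in>\<Theta>. concave_on (X \<times> X) (\<lambda>y. f y \<theta>)"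
      unfolding f_def \<Theta>_def using Phi_conc[OF _ _ aff X(2) AX] by auto
    show "(\<lambda>_. 0, 1) \<in> \<Theta>" unfolding \<Theta>_def using F_const by auto
    show "\<forall>a\<in>\<Theta>. \<forall>b\<in>\<Theta>. \<forall>t. 0 \<le> t \<and> t \<le> 1 \<longrightarrow>
         mix t a b \<in> \<Theta> \<and> (\<forall>y\<in>X \<times> X. f y (mix t a b) \<le> (1 - t) * f y a + t * f y b)"
    proof (intro ballI allI impI conjI)
      fix a b and t :: real
      assume a: "a \<in> \<Theta>" and b: "b \<in> \<Theta>" and t: "0 \<le> t \<and> t \<le> 1"
      have fa: "fst a \<in> F" "snd a > 0" using a by (auto simp: \<Theta>_def)
      have fb: "fst b \<in> F" "snd b > 0" using b by (auto simp: \<Theta>_def)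
      have "(1-t) * snd a + t * snd b > 0"
      proof (cases "t = 0")
        case True then show ?thesis using fa by simp
      next
        case False then have "t * snd b > 0" using t fb by simp
        moreover have "(1-t) * snd a \<ge> 0" using t fa by simp
        ultimately show ?thesis by simp
      qed
      then show "mix t a b \<in> \<Theta>" unfolding mix_def \<Theta>_def using F_lin[OF fa(1) fb(1)] by simp
      fix z assume z: "z \<in> X \<times> X"
      have mz: "A (fst z) \<in> M" "A (snd z) \<in> M" using z AX by auto
      have t0: "0 \<le> t" "t \<le> 1" using t by auto
      show "f z (mix t a b) \<le> (1 - t) * f z a + t * f z b"
        unfolding f_def mix_def using Phi_mix[where A=A and x="fst z" and y="snd z" and g=g and r=r, OF fa(1) fb(1) fa(2) fb(2) t0 mz(1) mz(2)] by simp
    qed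
    show "\<forall>z\<in>X \<times> X. \<exists>\<theta>\<in>\<Theta>. f z \<theta> < c"
    proof
      fix z assume z: "z \<in> X \<times> X"
      obtain x y where zxy: "z = (x, y)" by (cases z)
      have xy: "x \<in> X" "y \<in> X" using z zxy by auto
      have mx: "A x \<in> M" and my: "A y \<in> M" using AX xy by auto
      define H where "H = Hf (A x) (A y)"
      define D where "D = g \<bullet> x - g \<bullet> y"
      define k where "k = ln H + r"
      have val: "f z (\<lambda>\<omega>. \<alpha> * hl (A x) (A y) \<omega>, \<alpha>) = D + 2 * \<alpha> * k" if apos: "\<alpha> > 0" for \<alpha>
      proof -
        have e1: "(\<lambda>\<omega>. \<alpha> * hl (A x) (A y) \<omega> / \<alpha>) = hl (A x) (A y)" using apos by (intro ext) simp
        have e2: "(\<lambda>\<omega>. - (\<alpha> * hl (A x) (A y) \<omega>) / \<alpha>) = (\<lambda>\<omega>. - hl (A x) (A y) \<omega>)"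
          using apos by (intro ext) simp
        show ?thesis unfolding f_def zxy Phi_I
          by (simp only: fst_conv snd_conv e1 e2 H_eq1[OF mx my, symmetric] H_eq2[OF mx my, symmetric])
             (simp add: H_def D_def k_def algebra_simps)
      qed
      have memb: "(\<lambda>\<omega>. \<alpha> * hl (A x) (A y) \<omega>, \<alpha>) \<in> \<Theta>" if "\<alpha> > 0" for \<alpha>
        unfolding \<Theta>_def using F_scale[OF hl_F[OF mx my]] that by simp
      show "\<exists>\<theta>\<in>\<Theta>. f z \<theta> < c"
      proof (cases "k < 0")
        case True
        define \<alpha> where "\<alpha> = (\<bar>D\<bar> + \<bar>c\<bar> + 1) / (- 2 * k)"
        have apos: "\<alpha> > 0" using True by (simp add: \<alpha>_def divide_pos_neg)
        have "2 * \<alpha> * k = - (\<bar>D\<bar> + \<bar>c\<bar> + 1)" using True by (simp add: \<alpha>_def field_simps)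
        then have "D + 2 * \<alpha> * k < c" by linarith
        then show ?thesis using val[OF apos] memb[OF apos] by force
      next
        case False
        have "l * D \<le> 2 * \<delta>0" using claimT[OF xy] False by (simp add: D_def k_def H_def)
        then have Dle: "D \<le> 2 * \<delta>0 / l" using l by (simp add: field_simps)
        define \<alpha> where "\<alpha> = (c - D) / (4 * k + 4)"
        have cD: "c - D > 0" using Dle c by simp
        have apos: "\<alpha> > 0" using cD False by (simp add: \<alpha>_def)
        have "2 * \<alpha> * k = (c - D) * (2 * k / (4 * k + 4))" using False by (simp add: \<alpha>_def field_simps)
        also have "\<dots> < (c - D) * 1"
          using cD False by (intro mult_strict_left_mono) (simp_all add: field_simps)
        finally have "D + 2 * \<alpha> * k < c" by simp
        then show ?thesis using val[OF apos] memb[OF apos] by force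
      qed
    qed
  qed
  define V where "V = (INF \<phi>\<alpha>\<in>F \<times> {0<..}. SUP xy\<in>X \<times> X. ereal (Phi_r P p A g r (fst xy) (snd xy) (fst \<phi>\<alpha>) (snd \<phi>\<alpha>)))"
  have Vc: "V \<le> ereal c" if cc: "c > 2 * \<delta>0 / l" for c
  proof -
    obtain \<theta> where th: "\<theta> \<in> \<Theta>" and lt: "\<forall>z\<in>X \<times> X. f z \<theta> < c" using K[OF cc] by blast
    have "(SUP xy\<in>X \<times> X. ereal (Phi_r P p A g r (fst xy) (snd xy) (fst \<theta>) (snd \<theta>))) \<le> ereal c"
      using lt unfolding f_def by (intro SUP_least) (auto simp: less_imp_le)
    then show ?thesis unfolding V_def using th unfolding \<Theta>_def by (rule INF_lower2[rotated])
  qed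
  have Vle: "V \<le> ereal (2 * \<delta>0 / l)"
  proof (rule dense_ge)
    fix c assume c: "ereal (2 * \<delta>0 / l) < c"
    show "V \<le> c"
    proof (cases c)
      case (real c') then show ?thesis using Vc c by simp
    qed (use c in auto)
  qed
  have "Phi_star P p A X F g r = ereal (1/2) * V" unfolding Phi_star_def V_def by simp
  moreover have "ereal l * (ereal (1/2) * V) \<le> ereal \<delta>0"
  proof (cases V)
    case (real v)
    then have "v \<le> 2 * \<delta>0 / l" using Vle by simp
    then have "l * (1/2 * v) \<le> \<delta>0" using l by (simp add: field_simps)
    then show ?thesis using real by simp
  next
    case PInf then show ?thesis using Vle by simp
  next
    case MInf then show ?thesis using l by simp
  qed
  ultimately show ?thesis by (simp add: l_def r'_def)
qed

end


theorem lemma3p2: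
  fixes P :: "'w::polish_space measure"
    and M :: "(real^'m) set"
    and p :: "real^'m \<Rightarrow> 'w \<Rightarrow> real"
    and F :: "('w \<Rightarrow> real) set"
    and X :: "(real^'n) set"
    and A :: "real^'n \<Rightarrow> real^'m"
    and g :: "real^'n"
  assumes good: "good_pair P M p F"
    and X_ne: "X \<noteq> {}" and X_convex: "convex X" and X_compact: "compact X"
    and A_affine: "\<exists>L b. linear L \<and> A = (\<lambda>x. L x + b)"
    and AX: "A ` X \<subseteq> M"
  shows "(\<forall>\<delta>::real. 0 < \<delta> \<and> \<delta> < 1 \<longrightarrow>
            risk_star P p A X g (\<delta>\<^sup>2 / 4) \<ge> Phi_star P p A X F g (ln (1 / \<delta>)))
       \<and> (\<forall>\<epsilon>::real. 0 < \<epsilon> \<and> \<epsilon> < 1/4 \<longrightarrow>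
            risk_star P p A X g \<epsilon> \<ge>
              ereal (ln (1 / (4 * \<epsilon>)) / (2 * ln (2 / \<epsilon>))) * Phi_star P p A X F g (ln (2 / \<epsilon>)))"
proof -
  interpret gp P M p F by (rule gp.intro[OF good])
  obtain L b where aff: "linear L" "A = (\<lambda>x. L x + b)" using A_affine by blast
  have key: "ereal (ln (1/\<delta>) / r) * Phi_star P p A X F g r \<le> risk_star P p A X g (\<delta>\<^sup>2 / 4)"
    if d: "0 < \<delta>" "\<delta> < 1" and r: "ln (1/\<delta>) \<le> r" for \<delta> r
    unfolding risk_star_def
  proof (rule INF_greatest)
    fix ghat :: "'w \<Rightarrow> real" assume gh: "ghat \<in> borel_measurable P"
    show "ereal (ln (1/\<delta>) / r) * Phi_star P p A X F g r \<le> risk P p A X g ghat (\<delta>\<^sup>2 / 4)"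
      unfolding risk_def
    proof (rule Inf_greatest)
      fix e assume "e \<in> {ereal \<delta>0 | \<delta>0. (SUP x\<in>X. ereal (miss_prob P p A g ghat x \<delta>0)) < ereal (\<delta>\<^sup>2 / 4)}"
      then obtain \<delta>0 where e: "e = ereal \<delta>0"
        and sup: "(SUP x\<in>X. ereal (miss_prob P p A g ghat x \<delta>0)) < ereal (\<delta>\<^sup>2 / 4)" by blast
      show "ereal (ln (1/\<delta>) / r) * Phi_star P p A X F g r \<le> e"
        unfolding e using main[OF X_compact X_convex X_ne aff AX d r gh sup] .
    qed
  qed
  show ?thesis
  proof (intro conjI allI impI)
    fix \<delta> :: real assume d: "0 < \<delta> \<and> \<delta> < 1"
    have lpos: "ln (1/\<delta>) > 0" using d by simp
    have "ereal (ln (1/\<delta>) / ln (1/\<delta>)) * Phi_star P p A X F g (ln (1/\<delta>)) \<le> risk_star P p A X g (\<delta>\<^sup>2 / 4)"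
      using key[of \<delta> "ln (1/\<delta>)"] d by simp
    then show "Phi_star P p A X F g (ln (1/\<delta>)) \<le> risk_star P p A X g (\<delta>\<^sup>2 / 4)"
      using lpos by (simp add: one_ereal_def[symmetric])
  next
    fix \<epsilon> :: real assume e: "0 < \<epsilon> \<and> \<epsilon> < 1/4"
    define s where "s = sqrt \<epsilon>"
    have s0: "0 < s" using e by (simp add: s_def)
    have ss: "s^2 = \<epsilon>" using e by (simp add: s_def)
    have s1: "s < 1/2"
    proof -
      have "s < sqrt (1/4)" unfolding s_def using e by (intro real_sqrt_less_mono) simp
      also have "sqrt (1/4) = (1/2::real)" by (simp add: real_sqrt_divide)
      finally show ?thesis .
    qed
    define \<delta> where "\<delta> = 2 * s"
    have d: "0 < \<delta>" "\<delta> < 1" using s0 s1 by (simp_all add: \<delta>_def)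
    have dd: "\<delta>\<^sup>2 / 4 = \<epsilon>" using ss by (simp add: \<delta>_def power_mult_distrib)
    have r: "ln (1/\<delta>) \<le> ln (2/\<epsilon>)"
    proof -
      have "s * s \<le> s * 4" using s0 s1 by (intro mult_left_mono) auto
      then have e4: "\<epsilon> \<le> s * 4" using ss by (simp add: power2_eq_square)
      have "1/\<delta> \<le> 2/\<epsilon>" using s0 s1 ss e e4 by (simp add: \<delta>_def field_simps power2_eq_square)
      then show ?thesis using d e by simp
    qed
    have fac: "ln (1/\<delta>) / ln (2/\<epsilon>) = ln (1 / (4 * \<epsilon>)) / (2 * ln (2 / \<epsilon>))"
    proof -
      have "1 / (4 * \<epsilon>) = (1/\<delta>)^2" using ss by (simp add: \<delta>_def power_mult_distrib power_divide)
      then have "ln (1 / (4 * \<epsilon>)) = 2 * ln (1/\<delta>)" using d by (simp add: ln_realpow)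
      then show ?thesis by simp
    qed
    show "ereal (ln (1 / (4 * \<epsilon>)) / (2 * ln (2 / \<epsilon>))) * Phi_star P p A X F g (ln (2 / \<epsilon>))
          \<le> risk_star P p A X g \<epsilon>"
      using key[OF d r] unfolding fac dd .
  qed
qed


end
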